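(* Let $n$ be an integer, $p$ a prime dividing $2n+1$, $K$ a number field containing a root $\omega$ of $\Delta_n=S_n'S_{n-1}-S_nS_{n-1}'$, and $v$ a valuation on $K$ with $v(p)=1$. Then $v(S_{n-1}(\omega))=0$.
   Context: The Chebyshev polynomials $S_j(\omega)$ are defined for all integers $j$ by $S_0=1$, $S_1=\omega$, $S_{j+1}=\omega S_j-S_{j-1}$; primes denote derivatives with respect to $\omega$. *)

theory Defs
  imports "HOL-Computational_Algebra.Polynomial" "HOL-Library.Extended_Real"
begin

fun chebS_nat :: "nat \<Rightarrow> int poly" where
  "chebS_nat 0 = 1"
| "chebS_nat (Suc 0) = [:0, 1:]"
| "chebS_nat (Suc (Suc k)) = [:0, 1:] * chebS_nat (Suc k) - chebS_nat k"

text \<open>Extension to all integers by the same recurrence (run backwards):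
  S_(-1) = 0 and S_(-j) = - S_(j-2) for j >= 2.\<close>
definition chebS :: "int \<Rightarrow> int poly" where
  "chebS j = (if 0 \<le> j then chebS_nat (nat j)
              else if j = -1 then 0 else - chebS_nat (nat (- j - 2)))"

definition Delta :: "int \<Rightarrow> int poly" where
  "Delta n = pderiv (chebS n) * chebS (n - 1) - chebS n * pderiv (chebS (n - 1))"

definition number_field :: "'a::field_char_0 itself \<Rightarrow> bool" where
  "number_field _ \<longleftrightarrow>
     (\<exists>B :: 'a set. finite B \<and> (\<forall>x. \<exists>c :: 'a \<Rightarrow> rat. x = (\<Sum>b\<in>B. of_rat (c b) * b)))"

definition valuation :: "('a::field \<Rightarrow> ereal) \<Rightarrow> bool" where
  "valuation v \<longleftrightarrow>
     (\<forall>x. v x = \<infinity> \<longleftrightarrow> x = 0) \<and>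
     (\<forall>x. v x \<noteq> - \<infinity>) \<and>
     (\<forall>x y. v (x * y) = v x + v y) \<and>
     (\<forall>x y. min (v x) (v y) \<le> v (x + y))"

end

theory Submission
  imports Defs
begin

definition Xp :: "int poly" where "Xp = [:0, 1:]"
abbreviation "S \<equiv> chebS_nat"

lemma S_rec: "S (Suc (Suc k)) = Xp * S (Suc k) - S k" by (simp add: Xp_def)
lemma S0: "S 0 = 1" by simp
lemma S1: "S (Suc 0) = Xp" unfolding Xp_def by simp
lemma dX: "pderiv Xp = 1" by (simp add: Xp_def pderiv_pCons)

lemma cheb_id: "S (Suc k)^2 + S k ^2 - Xp * S (Suc k) * S k = 1"
proof (induction k)
  case 0 then show ?case unfolding S1 S0 by (simp add: algebra_simps power2_eq_square)
next
  case (Suc k)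
  then show ?case unfolding S_rec by (simp add: algebra_simps power2_eq_square)
qed

lemma cheb_R: "(Xp^2 - 4) * pderiv (S k) = 2 * of_nat (k+1) * S (Suc k) - of_nat (k+2) * Xp * S k
   \<and> (Xp^2 - 4) * pderiv (S (Suc k)) = 2 * of_nat (k+2) * S (Suc (Suc k)) - of_nat (k+3) * Xp * S (Suc k)"
proof (induction k)
  case 0 then show ?case unfolding S_rec S1 S0 by (simp add: algebra_simps power2_eq_square dX)
next
  case (Suc k)
  then have IH: "(Xp^2 - 4) * pderiv (S k) = 2 * of_nat (k+1) * S (Suc k) - of_nat (k+2) * Xp * S k"
   "(Xp^2 - 4) * pderiv (S (Suc k)) = 2 * of_nat (k+2) * S (Suc (Suc k)) - of_nat (k+3) * Xp * S (Suc k)"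
    by auto
  have d: "pderiv (S (Suc (Suc k))) = S (Suc k) + Xp * pderiv (S (Suc k)) - pderiv (S k)"
    unfolding S_rec by (simp add: pderiv_mult pderiv_diff dX)
  have "(Xp^2 - 4) * pderiv (S (Suc (Suc k))) = (Xp^2 - 4) * S (Suc k) + Xp * ((Xp^2 - 4) * pderiv (S (Suc k))) - (Xp^2 - 4) * pderiv (S k)"
    unfolding d by (simp add: algebra_simps)
  also have "\<dots> = 2 * of_nat (Suc k+2) * S (Suc (Suc (Suc k))) - of_nat (Suc k+3) * Xp * S (Suc (Suc k))"
    unfolding IH S_rec by (simp add: algebra_simps power2_eq_square)
  finally show ?case using IH by simp
qed

lemma cheb_E: "(Xp^2 - 4) * (pderiv (S (Suc k)) * S k - S (Suc k) * pderiv (S k))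
   = S (Suc k)^2 - S k ^2 - of_nat (2*k+3)"
proof -
  have R: "(Xp^2 - 4) * pderiv (S k) = 2 * of_nat (k+1) * S (Suc k) - of_nat (k+2) * Xp * S k"
     "(Xp^2 - 4) * pderiv (S (Suc k)) = 2 * of_nat (k+2) * S (Suc (Suc k)) - of_nat (k+3) * Xp * S (Suc k)"
    using cheb_R[of k] by auto
  have "(Xp^2 - 4) * (pderiv (S (Suc k)) * S k - S (Suc k) * pderiv (S k))
     = ((Xp^2 - 4) * pderiv (S (Suc k))) * S k - S (Suc k) * ((Xp^2 - 4) * pderiv (S k))"
    by (simp add: algebra_simps)
  also have "\<dots> = of_nat (2*k+3) * (Xp * S (Suc k) * S k) - 2 * of_nat (k+2) * S k ^ 2 - 2 * of_nat (k+1) * S (Suc k) ^ 2"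
    unfolding R S_rec by (simp add: algebra_simps power2_eq_square)
  also have "Xp * S (Suc k) * S k = S (Suc k)^2 + S k ^2 - 1" using cheb_id[of k] by (simp add: algebra_simps)
  also have "of_nat (2*k+3) * (S (Suc k)^2 + S k ^2 - 1) - 2 * of_nat (k+2) * S k ^ 2 - 2 * of_nat (k+1) * S (Suc k) ^ 2
     = S (Suc k)^2 - S k ^2 - (of_nat (2*k+3) :: int poly)"
    by (simp add: algebra_simps)
  finally show ?thesis .
qed
definition ev :: "'k::comm_ring_1 \<Rightarrow> int poly \<Rightarrow> 'k" where
  "ev w q = poly (map_poly of_int q) w"

lemma mp_add: "map_poly (of_int :: int \<Rightarrow> 'k::comm_ring_1) (p + q) = map_poly of_int p + map_poly of_int q"
  by (simp add: poly_eq_iff coeff_map_poly)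
lemma mp_diff: "map_poly (of_int :: int \<Rightarrow> 'k::comm_ring_1) (p - q) = map_poly of_int p - map_poly of_int q"
  by (simp add: poly_eq_iff coeff_map_poly)
lemma mp_uminus: "map_poly (of_int :: int \<Rightarrow> 'k::comm_ring_1) (- p) = - map_poly of_int p"
  by (simp add: poly_eq_iff coeff_map_poly)
lemma mp_mult: "map_poly (of_int :: int \<Rightarrow> 'k::comm_ring_1) (p * q) = map_poly of_int p * map_poly of_int q"
  by (simp add: poly_eq_iff coeff_map_poly coeff_mult)

lemma ev_add[simp]: "ev w (p + q) = ev w p + ev w q" by (simp add: ev_def mp_add)
lemma ev_diff[simp]: "ev w (p - q) = ev w p - ev w q" by (simp add: ev_def mp_diff)
lemma ev_uminus[simp]: "ev w (- p) = - ev w p" by (simp add: ev_def mp_uminus)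
lemma ev_mult[simp]: "ev w (p * q) = ev w p * ev w q" by (simp add: ev_def mp_mult)
lemma ev_X[simp]: "ev w Xp = w" by (simp add: ev_def Xp_def map_poly_pCons)
lemma ev_of_nat[simp]: "ev w (of_nat k) = of_nat k" by (simp add: ev_def of_nat_poly map_poly_pCons)
lemma ev_num[simp]: "ev w (numeral k) = numeral k"
  using ev_of_nat[of w "numeral k"] by simp
lemma ev_1[simp]: "ev w 1 = 1" by (simp add: ev_def)
lemma ev_0[simp]: "ev w 0 = 0" by (simp add: ev_def)

lemma ev_pow[simp]: "ev w (p ^ k) = ev w p ^ k" by (induction k) simp_all

context
  fixes v :: "'k::field \<Rightarrow> ereal"
  assumes val: "valuation v"
begin

lemma v_mult: "v (x * y) = v x + v y" using val unfolding valuation_def by blast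
lemma v_add: "min (v x) (v y) \<le> v (x + y)" using val unfolding valuation_def by blast
lemma v_inf: "v x = \<infinity> \<longleftrightarrow> x = 0" using val unfolding valuation_def by blast
lemma v_ninf: "v x \<noteq> - \<infinity>" using val unfolding valuation_def by blast

lemma v_fin: "x \<noteq> 0 \<Longrightarrow> \<bar>v x\<bar> \<noteq> \<infinity>"
  using v_inf[of x] v_ninf[of x] by auto

lemma v_one: "v 1 = 0"
proof -
  have "v 1 = v 1 + v 1" using v_mult[of 1 1] by simp
  moreover have "\<bar>v 1\<bar> \<noteq> \<infinity>" using v_fin[of 1] by simp
  ultimately show ?thesis by (cases "v 1") auto
qed

lemma v_m1: "v (-1) = 0"
proof -
  have "v (-1) + v (-1) = 0" using v_mult[of "-1" "-1"] v_one by simp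
  moreover have "\<bar>v (-1)\<bar> \<noteq> \<infinity>" using v_fin[of "-1"] by simp
  ultimately show ?thesis by (cases "v (-1)") auto
qed

lemma v_neg: "v (- x) = v x"
  using v_mult[of "-1" x] v_m1 by simp

lemma v_sub: "min (v x) (v y) \<le> v (x - y)"
  using v_add[of x "-y"] v_neg[of y] by simp

lemma v_strict: assumes "v x < v y" shows "v (x + y) = v x"
proof (rule ccontr)
  assume ne: "v (x + y) \<noteq> v x"
  have "v (x + y) \<ge> v x" using v_add[of x y] assms by simp
  with ne have gt: "v (x + y) > v x" by simp
  have "min (v (x+y)) (v y) \<le> v x" using v_sub[of "x+y" y] by simp
  with gt assms show False by (simp add: min_def split: if_splits)
qed

lemma v_nat: "0 \<le> v (of_nat m)"
proof (induction m)
  case 0 then show ?case using v_inf[of 0] by simp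
next
  case (Suc m)
  have "min (v 1) (v (of_nat m)) \<le> v (1 + of_nat m)" by (rule v_add)
  then show ?case using Suc v_one by simp
qed

lemma v_int: "0 \<le> v (of_int z)"
proof (cases "z \<ge> 0")
  case True then show ?thesis using v_nat[of "nat z"] by simp
next
  case False
  then have "of_int z = - (of_nat (nat (-z)) :: 'k)" by simp
  then show ?thesis using v_nat[of "nat (-z)"] v_neg by simp
qed

lemma v_pos_sq: "0 < v x + v x \<Longrightarrow> 0 < v x"
  by (cases "v x") auto

end


lemma ev_S_rec: "ev w (S (Suc (Suc j))) = w * ev w (S (Suc j)) - ev w (S j)"
  unfolding S_rec by simp
lemma ev_S0: "ev w (S 0) = 1" by simp
lemma ev_S1: "ev w (S (Suc 0)) = w" unfolding S1 by simp

context
  fixes v :: "'k::field \<Rightarrow> ereal"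
  assumes val: "valuation v"
begin

lemma v_S_nonneg:
  assumes "0 \<le> v w"
  shows "0 \<le> v (ev w (S j)) \<and> 0 \<le> v (ev w (S (Suc j)))"
proof (induction j)
  case 0 then show ?case using assms v_one[OF val] by (simp del: chebS_nat.simps add: ev_S0 ev_S1)
next
  case (Suc j)
  have "v (w * ev w (S (Suc j))) \<ge> 0" using Suc assms v_mult[OF val] by simp
  then have "min (v (w * ev w (S (Suc j)))) (v (ev w (S j))) \<ge> 0" using Suc by simp
  then have "0 \<le> v (ev w (S (Suc (Suc j))))" unfolding ev_S_rec using v_sub[OF val] order_trans by blast
  then show ?case using Suc by simp
qed

lemma v_S_neg:
  assumes "v w < 0"
  shows "v (ev w (S (Suc j))) < v (ev w (S j)) \<and> v (ev w (S j)) \<le> 0"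
proof (induction j)
  case 0 then show ?case using assms v_one[OF val] by (simp del: chebS_nat.simps add: ev_S0 ev_S1)
next
  case (Suc j)
  let ?a = "ev w (S (Suc j))" and ?b = "ev w (S j)"
  have fa: "\<bar>v ?a\<bar> \<noteq> \<infinity>" using Suc v_ninf[OF val, of ?a] by auto
  have fw: "\<bar>v w\<bar> \<noteq> \<infinity>" using assms v_ninf[OF val, of w] by (cases "v w") auto
  have lt: "v w + v ?a < v ?a" using fa fw assms by (cases "v w"; cases "v ?a") auto
  have "v (w * ?a) < v (- ?b)" using lt Suc v_mult[OF val] v_neg[OF val] by (metis less_trans)
  then have "v (w * ?a + - ?b) = v (w * ?a)" by (rule v_strict[OF val])
  then have "v (ev w (S (Suc (Suc j)))) = v w + v ?a" unfolding ev_S_rec using v_mult[OF val] by simp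
  then show ?case using lt Suc by (auto simp del: chebS_nat.simps)
qed

lemma core:
  fixes p :: int and a b w :: 'k and c :: nat
  assumes p: "prime p" "p dvd int c" and vp: "v (of_int p) = 1"
    and e1: "a^2 - b^2 = of_nat c" and e2: "a^2 + b^2 - w * a * b = 1"
    and va: "0 \<le> v a" and vb: "0 \<le> v b" and vw: "0 \<le> v w"
  shows "v a = 0 \<and> v b = 0"
proof -
  obtain q where q: "int c = p * q" using p by (auto elim: dvdE)
  have "v (of_nat c) = v (of_int p * of_int q)" using q by (metis of_int_mult of_int_of_nat_eq)
  also have "\<dots> = 1 + v (of_int q)" using v_mult[OF val] vp by simp
  finally have vc0: "v (of_nat c) = 1 + v (of_int q)" .
  have vc: "v (of_nat c) > 0" using v_int[OF val, of q] unfolding vc0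
    by (cases "v (of_int q)") auto
  have sq: "v (x^2) = v x + v x" for x using v_mult[OF val, of x x] by (simp add: power2_eq_square)
  have both: False if "0 < v a" "0 < v b"
  proof -
    have A: "0 < v (a^2)" "0 < v (b^2)" using that sq add_pos_pos by metis+
    have B: "0 < v (w * a * b)" using that vw v_mult[OF val]
      by (metis add_nonneg_pos add_pos_pos)
    have "0 < min (v (a^2)) (v (b^2))" using A by simp
    then have C: "0 < v (a^2 + b^2)" using v_add[OF val, of "a^2" "b^2"] by (rule less_le_trans)
    have "0 < min (v (a^2 + b^2)) (v (w * a * b))" using B C by simp
    then have "0 < v (a^2 + b^2 - w * a * b)" using v_sub[OF val] less_le_trans by blast
    then show False using e2 v_one[OF val] by simp
  qed
  have "v a \<noteq> 0 \<Longrightarrow> 0 < v b"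
  proof -
    assume "v a \<noteq> 0" then have "0 < v a" using va by simp
    then have "0 < v (a^2)" using sq add_pos_pos by metis
    then have "0 < min (v (a^2)) (v (of_nat c))" using vc by simp
    then have "0 < v (b^2)" using v_sub[OF val, of "a^2" "of_nat c"] e1
      by (metis (no_types, lifting) cancel_ab_semigroup_add_class.diff_right_commute diff_self
          eq_iff_diff_eq_0 less_le_trans)
    then show "0 < v b" using sq v_pos_sq[OF val] by metis
  qed
  moreover have "v b \<noteq> 0 \<Longrightarrow> 0 < v a"
  proof -
    assume "v b \<noteq> 0" then have "0 < v b" using vb by simp
    then have "0 < v (b^2)" using sq add_pos_pos by metis
    then have "0 < min (v (of_nat c)) (v (b^2))" using vc by simp
    moreover have "a^2 = of_nat c + b^2" using e1 by (simp add: algebra_simps)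
    ultimately have "0 < v (a^2)" using v_add[OF val, of "of_nat c" "b^2"] less_le_trans by metis
    then show "0 < v a" using sq v_pos_sq[OF val] by metis
  qed
  ultimately show ?thesis using both va vb by fastforce
qed

end


lemma vw_nonneg:
  fixes v :: "'k::field \<Rightarrow> ereal"
  assumes val: "valuation v"
    and e1: "ev w (S (Suc k))^2 - ev w (S k)^2 = of_nat c"
  shows "0 \<le> v w"
proof (rule ccontr)
  assume "\<not> 0 \<le> v w"
  then have neg: "v w < 0" by simp
  let ?a = "ev w (S (Suc k))" and ?b = "ev w (S k)"
  have ab: "v ?a < v ?b" "v ?b \<le> 0" using v_S_neg[OF val neg, of k] by auto
  have fa: "\<bar>v ?a\<bar> \<noteq> \<infinity>" "\<bar>v ?b\<bar> \<noteq> \<infinity>" using ab v_ninf[OF val, of ?a] v_ninf[OF val, of ?b] by (cases "v ?a"; cases "v ?b"; auto)+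
  have sq: "v (x^2) = v x + v x" for x using v_mult[OF val, of x x] by (simp add: power2_eq_square)
  have lt: "v ?a + v ?a < v ?b + v ?b" "v ?a + v ?a < 0" using ab fa by (cases "v ?a"; cases "v ?b"; auto)+
  have "v (?a^2) < v (- (?b^2))" using lt sq v_neg[OF val] by simp
  then have "v (?a^2 + - (?b^2)) = v (?a^2)" by (rule v_strict[OF val])
  then have "v (of_nat c :: 'k) < 0" using e1 lt sq by simp
  then show False using v_nat[OF val, of c] by simp
qed

theorem lemma5p6:
  fixes n :: int and p :: int and \<omega> :: "'k::field_char_0" and v :: "'k \<Rightarrow> ereal"
  assumes "prime p" and "p dvd 2 * n + 1"
    and "number_field TYPE('k)"
    and "poly (map_poly of_int (Delta n)) \<omega> = 0"
    and "valuation v" and "v (of_int p) = 1"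
  shows "v (poly (map_poly of_int (chebS (n - 1))) \<omega>) = 0"
proof -
  note val = assms(5)
  have D0: "ev \<omega> (Delta n) = 0" using assms(4) by (simp add: ev_def)
  have goal: "v (ev \<omega> (chebS (n - 1))) = 0 \<Longrightarrow> ?thesis" by (simp add: ev_def)
  have key: "ev \<omega> (S (Suc k))^2 - ev \<omega> (S k)^2 = of_nat (2*k+3)"
    if "ev \<omega> (pderiv (S (Suc k)) * S k - S (Suc k) * pderiv (S k)) = 0" for k
  proof -
    define D where "D = pderiv (S (Suc k)) * S k - S (Suc k) * pderiv (S k)"
    have "ev \<omega> ((Xp^2 - 4) * D) = ev \<omega> (S (Suc k)^2 - S k ^2 - of_nat (2*k+3))"
      unfolding D_def by (simp only: cheb_E)
    also have "ev \<omega> ((Xp^2 - 4) * D) = (\<omega>^2 - 4) * ev \<omega> D"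
      by (simp only: ev_mult ev_diff ev_pow ev_X ev_num)
    also have "ev \<omega> (S (Suc k)^2 - S k ^2 - of_nat (2*k+3)) = ev \<omega> (S (Suc k))^2 - ev \<omega> (S k)^2 - of_nat (2*k+3)"
      by (simp only: ev_diff ev_pow ev_of_nat)
    finally show ?thesis using that unfolding D_def by simp
  qed
  have id: "ev \<omega> (S (Suc k))^2 + ev \<omega> (S k)^2 - \<omega> * ev \<omega> (S (Suc k)) * ev \<omega> (S k) = 1" for k
  proof -
    have "ev \<omega> (S (Suc k)^2 + S k ^2 - Xp * S (Suc k) * S k) = ev \<omega> 1" by (simp only: cheb_id)
    then show ?thesis by (simp del: chebS_nat.simps)
  qed
  have fin: "v (ev \<omega> (S (Suc k))) = 0 \<and> v (ev \<omega> (S k)) = 0"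
    if D: "ev \<omega> (pderiv (S (Suc k)) * S k - S (Suc k) * pderiv (S k)) = 0"
      and pd: "p dvd int (2*k+3)" for k
  proof -
    note e1 = key[OF D]
    have vw: "0 \<le> v \<omega>" by (rule vw_nonneg[OF val e1])
    show ?thesis
      by (rule core[OF val assms(1) pd assms(6) e1 id]) (use v_S_nonneg[OF val vw, of k] vw in auto)
  qed
  consider "n \<ge> 1" | "n \<le> -2" | "n = 0 \<or> n = -1" by linarith
  then show ?thesis
  proof cases
    case 1
    define k where "k = nat (n - 1)"
    have cn: "chebS n = S (Suc k)" "chebS (n - 1) = S k" using 1 by (simp_all add: chebS_def k_def Suc_nat_eq_nat_zadd1)
    have D: "ev \<omega> (pderiv (S (Suc k)) * S k - S (Suc k) * pderiv (S k)) = 0"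
      using D0 unfolding Delta_def cn .
    have pd: "p dvd int (2*k+3)" using assms(2) 1 by (simp add: k_def add.commute)
    have "v (ev \<omega> (S k)) = 0" using fin[OF D pd] by (rule conjunct2)
    then show ?thesis by (intro goal) (simp only: cn)
  next
    case 2
    define k where "k = nat (- n - 2)"
    have cn: "chebS n = - S k" "chebS (n - 1) = - S (Suc k)" using 2 by (simp_all add: chebS_def k_def Suc_nat_eq_nat_zadd1)
    have D: "ev \<omega> (pderiv (S (Suc k)) * S k - S (Suc k) * pderiv (S k)) = 0"
    proof -
      have aux: "(-a')*(-b) - (-a)*(-b') = -(b'*a - b*a')" for a a' b b' :: "int poly"
        by (simp add: algebra_simps)
      have "Delta n = - (pderiv (S (Suc k)) * S k - S (Suc k) * pderiv (S k))"
        unfolding Delta_def cn pderiv_minus by (rule aux)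
      then show ?thesis using D0 by (simp only: ev_uminus neg_equal_0_iff_equal)
    qed
    have pd: "p dvd int (2*k+3)"
    proof -
      have eq: "int (2*k+3) = - (2*n+1)" using 2 by (simp add: k_def)
      have "p dvd -(2*n+1)" using assms(2) by (simp only: dvd_minus_iff)
      then show ?thesis using eq by (simp only:)
    qed
    have "v (ev \<omega> (S (Suc k))) = 0" using fin[OF D pd] by (rule conjunct1)
    then show ?thesis by (intro goal) (simp only: cn ev_uminus v_neg[OF val])
  next
    case 3
    then have "p dvd 1 \<or> p dvd -1" using assms(2) by auto
    then have "is_unit p" by (simp only: dvd_minus_iff) blast
    then show ?thesis using assms(1) not_prime_unit by blast
  qed
qed

end
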